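(* Let $(G,c)$ be an edge-colored DAG, $G=(V,E)$, and suppose $ij\in E$ is covered, i.e. $\mathrm{pa}_G(j)=\mathrm{pa}_G(i)\cup\{i\}$. Let $G_{i\leftarrow j}$ be the DAG obtained by reversing $ij$ to $ji$, and color it by $c_{i\leftarrow j}(kl)=c(kl)$ for $kl\neq ji$ and $c_{i\leftarrow j}(ji)=c(ij)$ (vertices keeping distinct colors). If there is an edge $kl$ with $c(kl)=c(ij)$ and $l\notin\{i,j\}$, then $\mathcal M(G_{i\leftarrow j},c_{i\leftarrow j})\neq\mathcal M(G,c)$.
   Context: An edge-colored DAG $(G,c)$ has a map $c$ on $V\sqcup E$ in which every vertex forms its own color class. $\mathcal M(G,c)$ is the set of $(I-\Lambda)^{-T}\Omega(I-\Lambda)^{-1}$ with $\Omega=\mathrm{diag}(\omega_i)$, $\omega_i>0$, $\lambda_{ij}=0$ for $ij\notin E$, and $\lambda_{ij}=\lambda_{kl}$ whenever $c(ij)=c(kl)$. *)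

theory Defs
  imports "HOL-Analysis.Analysis"
begin

text \<open>The edge coloring is a function on pairs, relevant only on E.
  Every vertex forms its own color class, so there are no constraints on Omega.\<close>

definition parents :: "('n \<times> 'n) set \<Rightarrow> 'n \<Rightarrow> 'n set" where
  "parents E v = {u. (u, v) \<in> E}"

definition diag_mat :: "('n::finite \<Rightarrow> real) \<Rightarrow> real^'n^'n" where
  "diag_mat w = (\<chi> i j. if i = j then w i else 0)"

definition colored_model ::
  "('n::finite \<times> 'n) set \<Rightarrow> ('n \<times> 'n \<Rightarrow> 'c) \<Rightarrow> (real^'n^'n) set" where
  "colored_model E c =
     {transpose (matrix_inv (mat 1 - L)) ** diag_mat w ** matrix_inv (mat 1 - L) | L w.
        (\<forall>i. w i > 0) \<and>
        (\<forall>i j. (i, j) \<notin> E \<longrightarrow> L $ i $ j = 0) \<and>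
        (\<forall>i j k l. (i, j) \<in> E \<longrightarrow> (k, l) \<in> E \<longrightarrow> c (i, j) = c (k, l)
            \<longrightarrow> L $ i $ j = L $ k $ l)}"

definition reverse_edge :: "('n \<times> 'n) set \<Rightarrow> 'n \<Rightarrow> 'n \<Rightarrow> ('n \<times> 'n) set" where
  "reverse_edge E i j = (E - {(i, j)}) \<union> {(j, i)}"

definition reverse_color :: "('n \<times> 'n \<Rightarrow> 'c) \<Rightarrow> 'n \<Rightarrow> 'n \<Rightarrow> ('n \<times> 'n \<Rightarrow> 'c)" where
  "reverse_color c i j = (\<lambda>e. if e = (j, i) then c (i, j) else c e)"

end

theory Submission
  imports Defs
begin
lemma inv_props:
  fixes A :: "real^'n^'n"
  assumes "invertible A"
  shows "A ** matrix_inv A = mat 1 \<and> matrix_inv A ** A = mat 1"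
  using assms unfolding matrix_inv_def invertible_def by (rule someI_ex)

lemma mv_entry:
  fixes L :: "real^'n::finite^'n"
  shows "((mat 1 - L) *v x) $ u = x $ u - (\<Sum>v\<in>UNIV. L$u$v * x$v)"
proof -
  have "((mat 1 - L) *v x) $ u = (\<Sum>v\<in>UNIV. ((if u = v then 1 else 0) - L$u$v) * x$v)"
    by (simp add: matrix_vector_mult_def mat_def)
  also have "\<dots> = (\<Sum>v\<in>UNIV. (if u = v then x$v else 0)) - (\<Sum>v\<in>UNIV. L$u$v * x$v)"
  proof -
    have "(\<lambda>v. ((if u = v then 1 else 0) - L$u$v) * x$v) = (\<lambda>v. (if u = v then x$v else 0) - L$u$v * x$v)"
      by (auto simp: fun_eq_iff algebra_simps)
    then show ?thesis by (simp only: sum_subtractf)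
  qed
  finally show ?thesis by simp
qed

lemma mm_entry:
  fixes L B :: "real^'n::finite^'n"
  shows "(B ** (mat 1 - L)) $ v $ m = B$v$m - (\<Sum>u\<in>UNIV. B$v$u * L$u$m)"
proof -
  have "(B ** (mat 1 - L)) $ v $ m = (\<Sum>u\<in>UNIV. B$v$u * ((if u = m then 1 else 0) - L$u$m))"
    by (simp add: matrix_matrix_mult_def mat_def)
  also have "\<dots> = (\<Sum>u\<in>UNIV. (if u = m then B$v$u else 0)) - (\<Sum>u\<in>UNIV. B$v$u * L$u$m)"
  proof -
    have "(\<lambda>u. B$v$u * ((if u = m then 1 else 0) - L$u$m)) = (\<lambda>u. (if u = m then B$v$u else 0) - B$v$u * L$u$m)"
      by (auto simp: fun_eq_iff algebra_simps)
    then show ?thesis by (simp only: sum_subtractf)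
  qed
  finally show ?thesis by simp
qed

lemma acyc_invertible:
  fixes L :: "real^'n::finite^'n" and E :: "('n \<times> 'n) set"
  assumes ac: "acyclic E" and supp: "\<forall>u v. (u,v)\<notin>E \<longrightarrow> L$u$v = 0"
  shows "invertible (mat 1 - L)"
proof -
  have wf: "wf (E\<inverse>)" by (rule finite_acyclic_wf_converse) (auto simp: ac)
  have z: "x = 0" if h: "(mat 1 - L) *v x = 0" for x
  proof -
    have "x$u = 0" for u
      using wf
    proof (induct u rule: wf_induct_rule)
      case (less u)
      have "(\<Sum>v\<in>UNIV. L$u$v * x$v) = 0"
        by (rule sum.neutral) (use less supp in auto)
      moreover have "((mat 1 - L) *v x) $ u = 0" using h by simp
      ultimately show ?case by (simp add: mv_entry)
    qed
    then show ?thesis by (simp add: vec_eq_iff)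
  qed
  have "inj ((*v) (mat 1 - L))"
  proof (rule injI)
    fix x y assume "(mat 1 - L) *v x = (mat 1 - L) *v y"
    then have "(mat 1 - L) *v (x - y) = 0" by (simp add: matrix_vector_mult_diff_distrib)
    then show "x = y" using z by (metis eq_iff_diff_eq_0)
  qed
  then show ?thesis
    using matrix_left_invertible_injective invertible_left_inverse by blast
qed

lemma inv_pattern:
  fixes L B :: "real^'n::finite^'n" and E :: "('n \<times> 'n) set"
  assumes ac: "acyclic E" and supp: "\<forall>u v. (u,v)\<notin>E \<longrightarrow> L$u$v = 0"
    and BP: "B ** (mat 1 - L) = mat 1" and nr: "(v,m) \<notin> E\<^sup>*"
  shows "B$v$m = 0"
proof -
  have wf: "wf E" by (rule finite_acyclic_wf) (auto simp: ac)
  have "(v,m) \<notin> E\<^sup>* \<longrightarrow> B$v$m = 0"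
    using wf
  proof (induct m rule: wf_induct_rule)
    case (less m)
    show ?case
    proof
      assume nm: "(v,m) \<notin> E\<^sup>*"
      then have vm: "v \<noteq> m" by auto
      have "(\<Sum>u\<in>UNIV. B$v$u * L$u$m) = 0"
      proof (rule sum.neutral, rule ballI)
        fix u
        show "B$v$u * L$u$m = 0"
        proof (cases "(u,m) \<in> E")
          case True
          then have "(v,u) \<notin> E\<^sup>*" using nm rtrancl_into_rtrancl by metis
          then show ?thesis using less True by auto
        qed (use supp in auto)
      qed
      moreover have "(B ** (mat 1 - L)) $ v $ m = 0" using BP vm by (simp add: mat_def)
      ultimately show "B$v$m = 0" by (simp add: mm_entry)
    qed
  qed
  then show ?thesis using nr by blast
qed

lemma path_ij:
  assumes ac: "acyclic E" and cov: "parents E j = parents E i \<union> {i}"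
    and h1: "(i,x) \<in> E\<^sup>*" and h2: "(x,j) \<in> E\<^sup>*"
  shows "x = i \<or> x = j"
proof (rule ccontr)
  assume nx: "\<not> (x = i \<or> x = j)"
  then have "(x,j) \<in> E\<^sup>+" using h2 by (meson rtranclD)
  then obtain y where xy: "(x,y) \<in> E\<^sup>*" and yj: "(y,j) \<in> E" using tranclD2 by metis
  then have "y \<in> parents E j" by (simp add: parents_def)
  then have "y \<in> parents E i \<or> y = i" using cov by auto
  then show False
  proof
    assume "y \<in> parents E i"
    then have "(y,i) \<in> E" by (simp add: parents_def)
    then have "(i,i) \<in> E\<^sup>+" using h1 xy by (meson rtrancl_into_trancl1 rtrancl_trans)
    then show False using ac by (simp add: acyclic_def)
  next
    assume "y = i"
    then have "(x,i) \<in> E\<^sup>*" using xy by simp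
    moreover have "(i,x) \<in> E\<^sup>+" using h1 nx rtranclD by metis
    ultimately have "(i,i) \<in> E\<^sup>+" by (meson trancl_rtrancl_trancl)
    then show False using ac by (simp add: acyclic_def)
  qed
qed

lemma F_path:
  assumes "(u,v) \<in> (insert (j,i) E)\<^sup>*"
  shows "(u,v) \<in> E\<^sup>* \<or> ((u,j) \<in> E\<^sup>* \<and> (i,v) \<in> E\<^sup>*)"
  using assms
proof (induct rule: rtrancl_induct)
  case base then show ?case by simp
next
  case (step y z)
  from step(2) show ?case
  proof
    assume "(y,z) = (j,i)"
    then have "y = j" "z = i" by auto
    then show ?thesis using step(3) by auto
  next
    assume yz: "(y,z) \<in> E"
    from step(3) show ?thesis
    proof
      assume "(u,y) \<in> E\<^sup>*" then show ?thesis using yz by (meson rtrancl.rtrancl_into_rtrancl)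
    next
      assume "(u,j) \<in> E\<^sup>* \<and> (i,y) \<in> E\<^sup>*" then show ?thesis using yz by (meson rtrancl.rtrancl_into_rtrancl)
    qed
  qed
qed

lemma mutual:
  assumes ac: "acyclic E" and cov: "parents E j = parents E i \<union> {i}"
    and h1: "(u,v) \<in> (insert (j,i) E)\<^sup>*" and h2: "(v,u) \<in> (insert (j,i) E)\<^sup>*" and ne: "u \<noteq> v"
  shows "u \<in> {i,j} \<and> v \<in> {i,j}"
proof -
  have c1: "(u,v) \<in> E\<^sup>* \<or> ((u,j) \<in> E\<^sup>* \<and> (i,v) \<in> E\<^sup>*)" by (rule F_path[OF h1])
  have c2: "(v,u) \<in> E\<^sup>* \<or> ((v,j) \<in> E\<^sup>* \<and> (i,u) \<in> E\<^sup>*)" by (rule F_path[OF h2])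
  have nc: "\<not> ((u,v) \<in> E\<^sup>* \<and> (v,u) \<in> E\<^sup>*)"
  proof
    assume a: "(u,v) \<in> E\<^sup>* \<and> (v,u) \<in> E\<^sup>*"
    then have "(u,v) \<in> E\<^sup>+" using ne by (meson rtranclD)
    then have "(u,u) \<in> E\<^sup>+" using a by (meson trancl_rtrancl_trancl)
    then show False using ac by (simp add: acyclic_def)
  qed
  have "(i,u) \<in> E\<^sup>* \<and> (u,j) \<in> E\<^sup>* \<and> (i,v) \<in> E\<^sup>* \<and> (v,j) \<in> E\<^sup>*"
    using c1 c2 nc by (meson rtrancl_trans)
  then show ?thesis using path_ij[OF ac cov] by blast
qed

lemma rev_acyclic:
  assumes ac: "acyclic E" and e: "(i,j) \<in> E" and cov: "parents E j = parents E i \<union> {i}"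
  shows "acyclic (reverse_edge E i j)"
proof -
  let ?E' = "reverse_edge E i j"
  let ?F = "insert (j,i) E"
  have ij: "i \<noteq> j" using ac e unfolding acyclic_def by (metis trancl.r_into_trancl)
  have mem: "(u,v) \<in> ?E' \<longleftrightarrow> ((u,v) \<in> E \<and> (u,v) \<noteq> (i,j)) \<or> (u,v) = (j,i)" for u v
    by (auto simp: reverse_edge_def)
  have sub: "?E' \<subseteq> ?F" by (auto simp: reverse_edge_def)
  have irr: "(x,x) \<notin> E" for x using ac unfolding acyclic_def by (metis trancl.r_into_trancl)
  show ?thesis unfolding acyclic_def
  proof (intro allI notI)
    fix x assume "(x,x) \<in> ?E'\<^sup>+"
    then obtain y where xy: "(x,y) \<in> ?E'" and yx: "(y,x) \<in> ?E'\<^sup>*" by (meson tranclD)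
    show False
    proof (cases "y = x")
      case True
      then show ?thesis using xy mem irr ij by auto
    next
      case False
      have "(x,y) \<in> ?F\<^sup>*" using xy sub by auto
      moreover have "(y,x) \<in> ?F\<^sup>*" using yx rtrancl_mono[OF sub] by auto
      ultimately have "x \<in> {i,j} \<and> y \<in> {i,j}" using mutual[OF ac cov] False by metis
      then have xj: "x = j" and yi: "y = i" using xy mem False by auto
      then have "(i,j) \<in> ?E'\<^sup>+" using yx ij by (meson rtranclD)
      then obtain z where iz: "(i,z) \<in> ?E'\<^sup>*" and zj: "(z,j) \<in> ?E'" using tranclD2 by metis
      have zi: "z \<noteq> i" using zj mem ij by auto
      then have "(z,j) \<in> E" using zj mem ij by auto
      then have "z \<in> parents E i" using cov zi by (auto simp: parents_def)
      then have "(z,i) \<in> E" by (simp add: parents_def)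
      then have "(z,i) \<in> ?F\<^sup>*" by auto
      moreover have "(i,z) \<in> ?F\<^sup>*" using iz rtrancl_mono[OF sub] by auto
      ultimately have "z \<in> {i,j}" using mutual[OF ac cov] zi by metis
      then have "z = j" using zi by auto
      then show False using \<open>(z,j) \<in> E\<close> irr by auto
    qed
  qed
qed

lemma sum_single:
  fixes f :: "'n::finite \<Rightarrow> real"
  assumes "\<forall>x. x \<noteq> a \<longrightarrow> f x = 0"
  shows "sum f UNIV = f a"
proof -
  have "sum f UNIV = sum f {a}" by (rule sum.mono_neutral_right) (use assms in auto)
  then show ?thesis by simp
qed

lemma sum_pair:
  fixes f :: "'n::finite \<Rightarrow> real"
  assumes "a \<noteq> b" "\<forall>x. x \<notin> {a,b} \<longrightarrow> f x = 0"
  shows "sum f UNIV = f a + f b"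
proof -
  have "sum f UNIV = sum f {a,b}" by (rule sum.mono_neutral_right) (use assms in auto)
  then show ?thesis using assms by simp
qed

lemma mm_ent: "((A::real^'n::finite^'n) ** B) $ u $ v = (\<Sum>m\<in>UNIV. A$u$m * B$m$v)"
  by (simp add: matrix_matrix_mult_def)

lemma ImL_ent: "((mat 1 - (L::real^'n::finite^'n)) $ u $ v) = (if u = v then 1 else 0) - L$u$v"
  by (simp add: mat_def)

lemma nz_sum:
  fixes f :: "'n::finite \<Rightarrow> real"
  assumes "sum f UNIV \<noteq> 0" obtains m where "f m \<noteq> 0"
  using assms sum.neutral by (metis UNIV_I)

theorem lemma5p7:
  fixes E :: "('n::finite \<times> 'n) set" and c :: "'n \<times> 'n \<Rightarrow> 'c" and i j :: 'n
  assumes dag: "acyclic E"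
    and edge: "(i, j) \<in> E"
    and covered: "parents E j = parents E i \<union> {i}"
    and shared: "\<exists>k l. (k, l) \<in> E \<and> c (k, l) = c (i, j) \<and> l \<notin> {i, j}"
  shows "colored_model (reverse_edge E i j) (reverse_color c i j) \<noteq> colored_model E c"
proof
  assume eq: "colored_model (reverse_edge E i j) (reverse_color c i j) = colored_model E c"
  define E' where "E' = reverse_edge E i j"
  define c' where "c' = reverse_color c i j"
  define F where "F = insert (j,i) E"
  obtain k l where kl: "(k,l) \<in> E" and ckl: "c (k,l) = c (i,j)" and li: "l \<noteq> i" and lj: "l \<noteq> j"
    using shared by auto
  have ij: "i \<noteq> j" using dag edge unfolding acyclic_def by (metis trancl.r_into_trancl)
  have irr: "(x,x) \<notin> E" for x using dag unfolding acyclic_def by (metis trancl.r_into_trancl)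
  have ji: "(j,i) \<notin> E" using dag edge unfolding acyclic_def
    by (metis trancl.r_into_trancl trancl_trans)
  have mem: "(u,v) \<in> E' \<longleftrightarrow> ((u,v) \<in> E \<and> (u,v) \<noteq> (i,j)) \<or> (u,v) = (j,i)" for u v
    by (auto simp: reverse_edge_def E'_def)
  have ac': "acyclic E'" unfolding E'_def by (rule rev_acyclic[OF dag edge covered])
  have subE': "E' \<subseteq> F" by (auto simp: mem F_def)
  have subE: "E \<subseteq> F" by (auto simp: F_def)
  have c'ji: "c' (j,i) = c (i,j)" by (simp add: c'_def reverse_color_def)
  have c'kl: "c' (k,l) = c (k,l)" using li by (simp add: c'_def reverse_color_def)
  define L0 :: "real^'n^'n" where "L0 = (\<chi> u v. if (u,v) \<in> E' \<and> c' (u,v) = c (i,j) then 1 else 0)"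
  define A where "A = matrix_inv (mat 1 - L0)"
  define S0 where "S0 = transpose A ** diag_mat (\<lambda>_. 1) ** A"
  have supp0: "\<forall>u v. (u,v) \<notin> E' \<longrightarrow> L0$u$v = 0" by (simp add: L0_def)
  have "S0 \<in> colored_model E' c'"
    unfolding colored_model_def
  proof (rule CollectI, rule exI[of _ L0], rule exI[of _ "\<lambda>_. 1"], intro conjI)
    show "S0 = transpose (matrix_inv (mat 1 - L0)) ** diag_mat (\<lambda>_. 1) ** matrix_inv (mat 1 - L0)"
      by (simp add: S0_def A_def)
  qed (auto simp: L0_def)
  then have "S0 \<in> colored_model E c" using eq by (simp add: E'_def c'_def)
  then obtain L w where S0eq: "S0 = transpose (matrix_inv (mat 1 - L)) ** diag_mat w ** matrix_inv (mat 1 - L)"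
    and wpos: "\<forall>u. w u > 0" and supp: "\<forall>u v. (u,v) \<notin> E \<longrightarrow> L$u$v = 0"
    and col: "\<forall>a b a' b'. (a,b) \<in> E \<longrightarrow> (a',b') \<in> E \<longrightarrow> c (a,b) = c (a',b') \<longrightarrow> L$a$b = L$a'$b'"
    unfolding colored_model_def by blast
  define P where "P = mat 1 - L"
  define P0 where "P0 = mat 1 - L0"
  define B where "B = matrix_inv P"
  define D where "D = diag_mat w"
  have invP: "P ** B = mat 1 \<and> B ** P = mat 1"
    unfolding B_def P_def by (rule inv_props, rule acyc_invertible[OF dag supp])
  have invP0: "P0 ** A = mat 1 \<and> A ** P0 = mat 1"
    unfolding A_def P0_def by (rule inv_props, rule acyc_invertible[OF ac' supp0])
  have "diag_mat (\<lambda>_. 1) = (mat 1 :: real^'n^'n)"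
    by (simp add: diag_mat_def mat_def vec_eq_iff)
  then have S0A: "S0 = transpose A ** A" by (simp add: S0_def)
  have S0B: "S0 = transpose B ** D ** B" using S0eq by (simp add: B_def D_def P_def)
  define R where "R = A ** P"
  have RtR: "transpose R ** R = D"
  proof -
    have "transpose R ** R = transpose P ** (transpose A ** A) ** P"
      by (simp add: R_def matrix_transpose_mul matrix_mul_assoc)
    also have "\<dots> = transpose (B ** P) ** D ** (B ** P)"
      by (simp add: S0A[symmetric] S0B matrix_transpose_mul matrix_mul_assoc)
    also have "\<dots> = D" using invP by simp
    finally show ?thesis .
  qed
  define S where "S = B ** P0"
  have SR: "S ** R = mat 1"
  proof -
    have "S ** R = B ** (P0 ** A) ** P" by (simp add: S_def R_def matrix_mul_assoc)
    then show ?thesis using invP invP0 by simp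
  qed
  then have RS: "R ** S = mat 1" using matrix_left_right_inverse by blast
  define Di where "Di = diag_mat (\<lambda>u. 1 / w u)"
  have wne: "w u \<noteq> 0" for u using wpos by (metis less_irrefl)
  have DiD: "Di ** D = mat 1"
    using wne by (simp add: Di_def D_def diag_mat_def mat_def vec_eq_iff matrix_matrix_mult_def
        if_distrib[where f="\<lambda>x. x * _"] sum.delta cong: if_cong)
  have Seq: "S = Di ** transpose R"
  proof -
    have "Di ** transpose R = Di ** transpose R ** (R ** S)" using RS by simp
    also have "\<dots> = (Di ** (transpose R ** R)) ** S" by (simp add: matrix_mul_assoc)
    also have "\<dots> = S" using RtR DiD by simp
    finally show ?thesis by simp
  qed
  have Sent: "S$u$v = R$v$u / w u" for u v
    by (simp add: Seq Di_def diag_mat_def matrix_matrix_mult_def transpose_def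
        if_distrib[where f="\<lambda>x. x * _"] sum.delta cong: if_cong)
  have Rpat: "(u,v) \<in> F\<^sup>*" if nzR: "R$u$v \<noteq> 0" for u v
  proof -
    obtain m where "A$u$m * P$m$v \<noteq> 0" using nzR unfolding R_def mm_ent by (rule nz_sum)
    then have a: "A$u$m \<noteq> 0" and p: "P$m$v \<noteq> 0" by auto
    have "(u,m) \<in> E'\<^sup>*" using inv_pattern[OF ac' supp0, of A u m] invP0 a by (auto simp: P0_def)
    then have "(u,m) \<in> F\<^sup>*" using rtrancl_mono[OF subE'] by auto
    moreover have "m = v \<or> (m,v) \<in> E" using p supp by (auto simp: P_def mat_def split: if_splits)
    ultimately show ?thesis using subE by (auto intro: rtrancl_into_rtrancl)
  qed
  have Spat: "(u,v) \<in> F\<^sup>*" if nzS: "S$u$v \<noteq> 0" for u v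
  proof -
    obtain m where "B$u$m * P0$m$v \<noteq> 0" using nzS unfolding S_def mm_ent by (rule nz_sum)
    then have a: "B$u$m \<noteq> 0" and p: "P0$m$v \<noteq> 0" by auto
    have "(u,m) \<in> E\<^sup>*" using inv_pattern[OF dag supp, of B u m] invP a by (auto simp: P_def)
    then have "(u,m) \<in> F\<^sup>*" using rtrancl_mono[OF subE] by auto
    moreover have "m = v \<or> (m,v) \<in> E'" using p supp0 by (auto simp: P0_def mat_def split: if_splits)
    ultimately show ?thesis using subE' by (auto intro: rtrancl_into_rtrancl)
  qed
  have Rz: "R$x$y = 0" if "x \<noteq> y" "\<not> (x \<in> {i,j} \<and> y \<in> {i,j})" for x y
  proof (rule ccontr)
    assume nz: "R$x$y \<noteq> 0"
    then have "(x,y) \<in> F\<^sup>*" by (rule Rpat)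
    moreover have "S$y$x \<noteq> 0" using nz wpos Sent by (metis divide_eq_0_iff less_irrefl)
    then have "(y,x) \<in> F\<^sup>*" by (rule Spat)
    ultimately show False using mutual[OF dag covered, of x y] that by (auto simp: F_def)
  qed
  have PR: "P = P0 ** R"
  proof -
    have "P0 ** R = (P0 ** A) ** P" by (simp add: R_def matrix_mul_assoc)
    then show ?thesis using invP0 by simp
  qed
  have Pe: "P$m$v = (\<Sum>x\<in>UNIV. P0$m$x * R$x$v)" for m v using PR by (simp add: mm_ent)
  have Pent: "P$u$v = (if u = v then 1 else 0) - L$u$v" for u v by (simp add: P_def mat_def)
  have P0ent: "P0$u$v = (if u = v then 1 else 0) - L0$u$v" for u v by (simp add: P0_def mat_def)
  have L0ent: "L0$u$v = (if (u,v) \<in> E' \<and> c' (u,v) = c (i,j) then 1 else 0)" for u v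
    by (simp add: L0_def)
  have kl': "(k,l) \<in> E'" using kl lj by (simp add: mem)
  have kne: "k \<noteq> l" using kl irr by auto
  have colsum_l: "P$m$l = P0$m$l * R$l$l" for m
    using Pe[of m l] sum_single[of l "\<lambda>x. P0$m$x * R$x$l"] Rz li lj by auto
  have Rll: "R$l$l = 1"
    using colsum_l[of l] Pent[of l l] P0ent[of l l] L0ent[of l l] supp irr mem li by auto
  have Lkl: "L$k$l = 1"
    using colsum_l[of k] Rll Pent[of k l] P0ent[of k l] L0ent[of k l] kne kl' c'kl ckl by auto
  have colsum: "P$m$v = P0$m$i * R$i$v + P0$m$j * R$j$v" if "v \<in> {i,j}" for m v
    using Pe[of m v] sum_pair[OF ij, of "\<lambda>x. P0$m$x * R$x$v"] Rz that by auto
  have L0ij: "L0$i$j = 0" using L0ent[of i j] mem ij by auto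
  have L0ji: "L0$j$i = 1" using L0ent[of j i] mem c'ji by auto
  have Lii: "L$i$i = 0" "L$j$j = 0" using supp irr by auto
  have L0ii: "L0$i$i = 0" "L0$j$j = 0" using L0ent mem irr ij by auto
  have Lji: "L$j$i = 0" using supp ji by auto
  have Rii: "R$i$i = 1" using colsum[of i i] Pent[of i i] P0ent[of i i] P0ent[of i j] Lii L0ij L0ii ij by auto
  have Rji: "R$j$i = 1" using colsum[of i j] Pent[of j i] P0ent[of j i] P0ent[of j j] Lji L0ji L0ii Rii ij by auto
  have Rij: "R$i$j = - L$i$j" using colsum[of j i] Pent[of i j] P0ent[of i i] P0ent[of i j] L0ij L0ii ij by auto
  have Rjj: "R$j$j = 1 + R$i$j" using colsum[of j j] Pent[of j j] P0ent[of j i] P0ent[of j j] Lii L0ji L0ii ij by auto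
  have "(transpose R ** R)$i$j = R$i$i * R$i$j + R$j$i * R$j$j"
    using sum_pair[OF ij, of "\<lambda>x. R$x$i * R$x$j"] Rz[of _ i] ij
    by (auto simp: mm_ent transpose_def)
  moreover have "(transpose R ** R)$i$j = 0" using RtR ij by (simp add: D_def diag_mat_def)
  ultimately have "L$i$j = 1/2" using Rii Rji Rij Rjj by simp
  moreover have "L$i$j = L$k$l" using col edge kl ckl by metis
  ultimately show False using Lkl by simp
qed

end
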